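(* Let $M$ be a matroid on a finite set $E(M)$ and $\lambda\colon E(M)\to\mathbb{N}$. Choose pairwise disjoint finite sets $E_e$ ($e\in E(M)$) with $\#E_e=\lambda(e)$ and $e\in E_e$, and put $E(M_\lambda)=\bigsqcup_{e\in E(M)}E_e$. Let $\mathcal{B}(M_\lambda)$ be the collection of all subsets $B\subseteq E(M_\lambda)$ for which there are a basis $B'$ of $M$ and elements $x_e\in E_e$ for each $e\in E(M)-B'$ such that $B=E(M_\lambda)-\{x_e : e\notin B'\}$. Then $\mathcal{B}(M_\lambda)$ is the set of bases of a matroid on $E(M_\lambda)$.
   Context: $\mathbb{N}$ denotes the positive integers. *)

theory Defs
  imports Main
begin

definition matroid_bases :: "'a set \<Rightarrow> 'a set set \<Rightarrow> bool" where
  "matroid_bases E \<B> \<longleftrightarrow>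
     finite E \<and> \<B> \<noteq> {} \<and> (\<forall>B\<in>\<B>. B \<subseteq> E) \<and>
     (\<forall>B1\<in>\<B>. \<forall>B2\<in>\<B>. \<forall>x\<in>B1 - B2. \<exists>y\<in>B2 - B1. insert y (B1 - {x}) \<in> \<B>)"

end

theory Submission
  imports Defs
begin

lemma mem_char:
  assumes disj: "\<forall>e\<in>E. \<forall>f\<in>E. e \<noteq> f \<longrightarrow> Ee e \<inter> Ee f = {}"
    and x: "\<forall>e\<in>E - B'. x e \<in> Ee e" and g: "g \<in> E" "w \<in> Ee g"
  shows "w \<in> x ` (E - B') \<longleftrightarrow> g \<notin> B' \<and> w = x g"
proof
  assume "w \<in> x ` (E - B')"
  then obtain h where h: "h \<in> E - B'" "w = x h" by blast
  with x have "w \<in> Ee h" by blast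
  with g disj h have "h = g" by blast
  with h show "g \<notin> B' \<and> w = x g" by blast
next
  assume "g \<notin> B' \<and> w = x g" with g show "w \<in> x ` (E - B')" by blast
qed

theorem proposition3p3:
  fixes E :: "'a set" and \<B> :: "'a set set" and lam :: "'a \<Rightarrow> nat"
    and Ee :: "'a \<Rightarrow> 'a set"
  assumes M: "matroid_bases E \<B>"
    and lam_pos: "\<And>e. e \<in> E \<Longrightarrow> lam e > 0"
    and fin: "\<And>e. e \<in> E \<Longrightarrow> finite (Ee e)"
    and card: "\<And>e. e \<in> E \<Longrightarrow> card (Ee e) = lam e"
    and mem: "\<And>e. e \<in> E \<Longrightarrow> e \<in> Ee e"
    and disj: "\<And>e f. e \<in> E \<Longrightarrow> f \<in> E \<Longrightarrow> e \<noteq> f \<Longrightarrow> Ee e \<inter> Ee f = {}"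
  shows "matroid_bases (\<Union>e\<in>E. Ee e)
           {B. \<exists>B'\<in>\<B>. \<exists>x :: 'a \<Rightarrow> 'a. (\<forall>e\<in>E - B'. x e \<in> Ee e) \<and>
                 B = (\<Union>e\<in>E. Ee e) - x ` (E - B')}"
proof -
  define U where "U = (\<Union>e\<in>E. Ee e)"
  define S where "S = {B. \<exists>B'\<in>\<B>. \<exists>x :: 'a \<Rightarrow> 'a. (\<forall>e\<in>E - B'. x e \<in> Ee e) \<and>
                 B = U - x ` (E - B')}"
  have finE: "finite E" and Bne: "\<B> \<noteq> {}" and Bsub: "\<And>B. B \<in> \<B> \<Longrightarrow> B \<subseteq> E"
    and exch: "\<And>B1 B2 x. B1 \<in> \<B> \<Longrightarrow> B2 \<in> \<B> \<Longrightarrow> x \<in> B1 - B2 \<Longrightarrow>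
       \<exists>y\<in>B2 - B1. insert y (B1 - {x}) \<in> \<B>"
    using M unfolding matroid_bases_def by blast+
  have disj': "\<forall>e\<in>E. \<forall>f\<in>E. e \<noteq> f \<longrightarrow> Ee e \<inter> Ee f = {}"
    using disj by blast
  have blk: "\<And>a g h. g \<in> E \<Longrightarrow> h \<in> E \<Longrightarrow> a \<in> Ee g \<Longrightarrow> a \<in> Ee h \<Longrightarrow> g = h"
    using disj by blast
  have "matroid_bases U S"
    unfolding matroid_bases_def
  proof (intro conjI)
    show "finite U" unfolding U_def using finE fin by blast
    obtain B0 where "B0 \<in> \<B>" using Bne by blast
    then have "U - id ` (E - B0) \<in> S" unfolding S_def using mem
      by (intro CollectI bexI[of _ B0] exI[of _ id]) auto
    then show "S \<noteq> {}" by blast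
    show "\<forall>B\<in>S. B \<subseteq> U" unfolding S_def by blast
    show "\<forall>B1\<in>S. \<forall>B2\<in>S. \<forall>z\<in>B1 - B2. \<exists>y\<in>B2 - B1. insert y (B1 - {z}) \<in> S"
    proof (intro ballI)
      fix B1 B2 z assume "B1 \<in> S" "B2 \<in> S" and z: "z \<in> B1 - B2"
      obtain B1' x1 where B1': "B1' \<in> \<B>" and x1: "\<forall>e\<in>E - B1'. x1 e \<in> Ee e"
        and B1: "B1 = U - x1 ` (E - B1')" using \<open>B1 \<in> S\<close> unfolding S_def by blast
      obtain B2' x2 where B2': "B2' \<in> \<B>" and x2: "\<forall>e\<in>E - B2'. x2 e \<in> Ee e"
        and B2: "B2 = U - x2 ` (E - B2')" using \<open>B2 \<in> S\<close> unfolding S_def by blast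
      obtain e where e: "e \<in> E" "z \<in> Ee e" using z B1 unfolding U_def by blast
      have zU: "z \<in> U" using e unfolding U_def by blast
      have e2: "e \<notin> B2' \<and> z = x2 e"
        using z B2 zU mem_char[OF disj' x2 e] by blast
      have e1: "e \<in> B1' \<or> z \<noteq> x1 e"
        using z B1 mem_char[OF disj' x1 e] by blast
      define x3 where "x3 = x1(e := z)"
      show "\<exists>y\<in>B2 - B1. insert y (B1 - {z}) \<in> S"
      proof (cases "e \<in> B1'")
        case True
        then have "e \<in> B1' - B2'" using e2 by blast
        then obtain f where f: "f \<in> B2' - B1'" and B3: "insert f (B1' - {e}) \<in> \<B>"
          using exch[OF B1' B2'] by blast
        have fE: "f \<in> E" using f Bsub[OF B2'] by blast
        have fe: "f \<noteq> e" using f True by blast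
        have x1f: "x1 f \<in> Ee f" using x1 f fE by blast
        have x3: "\<forall>g\<in>E - insert f (B1' - {e}). x3 g \<in> Ee g"
          using x1 e unfolding x3_def by auto
        have y2: "x1 f \<in> B2"
        proof -
          have "x1 f \<in> U" using x1f fE unfolding U_def by blast
          moreover have "x1 f \<notin> x2 ` (E - B2')"
            using mem_char[OF disj' x2 fE x1f] f by simp
          ultimately show ?thesis using B2 by blast
        qed
        have y1: "x1 f \<notin> B1"
        proof -
          have "x1 f \<in> x1 ` (E - B1')" using f fE by blast
          then show ?thesis using B1 by simp
        qed
        have eq: "insert (x1 f) (B1 - {z}) = U - x3 ` (E - insert f (B1' - {e}))"
        proof (rule set_eqI)
          fix w
          show "w \<in> insert (x1 f) (B1 - {z}) \<longleftrightarrow> w \<in> U - x3 ` (E - insert f (B1' - {e}))"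
          proof (cases "w \<in> U")
            case False
            moreover have "x1 f \<in> U" using x1f fE unfolding U_def by blast
            ultimately show ?thesis using B1 by (auto simp: B1)
          next
            case True
            then obtain g where g: "g \<in> E" "w \<in> Ee g" unfolding U_def by blast
            have L: "w \<in> B1 \<longleftrightarrow> \<not> (g \<notin> B1' \<and> w = x1 g)"
              using mem_char[OF disj' x1 g] B1 True by blast
            have R: "w \<in> U - x3 ` (E - insert f (B1' - {e})) \<longleftrightarrow>
                \<not> (g \<notin> insert f (B1' - {e}) \<and> w = x3 g)"
              using mem_char[OF disj' x3 g] True by blast
            consider "g = e" | "g = f" | "g \<noteq> e" "g \<noteq> f" by blast
            then show ?thesis
            proof cases
              case 1
              have "w \<noteq> x1 f"
              proof
                assume "w = x1 f"
                then have "x1 f \<in> Ee e" using g 1 by simp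
                then show False using blk[OF fE e(1) x1f] fe by simp
              qed
              have R1: "w \<in> U - x3 ` (E - insert f (B1' - {e})) \<longleftrightarrow> w \<noteq> z"
                using R 1 fe unfolding x3_def by simp
              have "w \<in> B1" using L 1 \<open>e \<in> B1'\<close> by simp
              then show ?thesis unfolding R1 using \<open>w \<noteq> x1 f\<close> by simp
            next
              case 2
              have "w \<noteq> z"
              proof
                assume "w = z"
                then have "z \<in> Ee f" using g 2 by simp
                then show False using blk[OF fE e(1) _ e(2)] fe by simp
              qed
              have R1: "w \<in> U - x3 ` (E - insert f (B1' - {e})) \<longleftrightarrow> True"
                using R 2 by simp
              have "w \<in> B1 \<longleftrightarrow> w \<noteq> x1 f" using L 2 f by simp
              then show ?thesis unfolding R1 using \<open>w \<noteq> z\<close> by simp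
            next
              case 3
              have "w \<noteq> z"
              proof
                assume "w = z"
                then show False using blk[OF g(1) e(1) g(2)] e(2) 3 by simp
              qed
              moreover have "w \<noteq> x1 f"
              proof
                assume "w = x1 f"
                then show False using blk[OF g(1) fE g(2)] x1f 3 by simp
              qed
              moreover have R1: "w \<in> U - x3 ` (E - insert f (B1' - {e})) \<longleftrightarrow> w \<in> B1"
                using R L 3 unfolding x3_def by simp
              ultimately show ?thesis unfolding R1 by simp
            qed
          qed
        qed
        show ?thesis
          apply (rule bexI[of _ "x1 f"])
          using eq B3 x3 y1 y2 unfolding S_def by blast+
      next
        case False
        have x3: "\<forall>g\<in>E - B1'. x3 g \<in> Ee g"
          using x1 e unfolding x3_def by auto
        have x1e: "x1 e \<in> Ee e" using x1 e False by blast
        have ne: "z \<noteq> x1 e" using e1 False by blast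
        have y2: "x1 e \<in> B2"
        proof -
          have "x1 e \<in> U" using x1e e unfolding U_def by blast
          moreover have "x1 e \<notin> x2 ` (E - B2')"
            using mem_char[OF disj' x2 e(1) x1e] e2 ne by simp
          ultimately show ?thesis using B2 by simp
        qed
        have y1: "x1 e \<notin> B1"
        proof -
          have "x1 e \<in> x1 ` (E - B1')" using False e by blast
          then show ?thesis using B1 by simp
        qed
        have eq: "insert (x1 e) (B1 - {z}) = U - x3 ` (E - B1')"
        proof (rule set_eqI)
          fix w
          show "w \<in> insert (x1 e) (B1 - {z}) \<longleftrightarrow> w \<in> U - x3 ` (E - B1')"
          proof (cases "w \<in> U")
            case False
            moreover have "x1 e \<in> U" using x1e e unfolding U_def by blast
            ultimately show ?thesis using B1 by (auto simp: B1)
          next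
            case True
            then obtain g where g: "g \<in> E" "w \<in> Ee g" unfolding U_def by blast
            have L: "w \<in> B1 \<longleftrightarrow> \<not> (g \<notin> B1' \<and> w = x1 g)"
              using mem_char[OF disj' x1 g] B1 True by blast
            have R: "w \<in> U - x3 ` (E - B1') \<longleftrightarrow> \<not> (g \<notin> B1' \<and> w = x3 g)"
              using mem_char[OF disj' x3 g] True by blast
            show ?thesis
            proof (cases "g = e")
              case True
              have R1: "w \<in> U - x3 ` (E - B1') \<longleftrightarrow> w \<noteq> z"
                using R True False unfolding x3_def by simp
              have "w \<in> B1 \<longleftrightarrow> w \<noteq> x1 e" using L True False by simp
              then show ?thesis unfolding R1 using ne by auto
            next
              case ge: False
              have "w \<noteq> z"
              proof
                assume "w = z"
                then show False using blk[OF g(1) e(1) g(2)] e(2) ge by simp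
              qed
              moreover have "w \<noteq> x1 e"
              proof
                assume "w = x1 e"
                then show False using blk[OF g(1) e(1) g(2)] x1e ge by simp
              qed
              moreover have R1: "w \<in> U - x3 ` (E - B1') \<longleftrightarrow> w \<in> B1"
                using R L ge unfolding x3_def by simp
              ultimately show ?thesis unfolding R1 by simp
            qed
          qed
        qed
        show ?thesis
          apply (rule bexI[of _ "x1 e"])
          using eq B1' x3 y1 y2 unfolding S_def by blast+
      qed
    qed
  qed
  then show ?thesis unfolding U_def S_def .
qed

end
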